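(* There exists a countable family $\mathcal{F}=\{f_n : n\in\omega\}$ of continuous functions $f_n\colon 2^\omega\to 2^\omega$ such that every maximal square covered by $\mathcal{F}$ is uncountable; that is, whenever $S\subseteq 2^\omega$ is maximal with respect to inclusion among subsets of $2^\omega$ such that $S\times S$ is covered by $\mathcal{F}$, the set $S$ is uncountable.
   Context: $2^\omega$ denotes the Cantor set, i.e. the space of all functions $\omega\to\{0,1\}$ with the product topology. A set $M\subseteq 2^\omega\times 2^\omega$ is said to be covered by a family of functions $\mathcal{F}$ if for every $(x,y)\in M$ there is $f\in\mathcal{F}$ such that either $y=f(x)$ or $x=f(y)$. *)

theory Defs
  imports "HOL-Analysis.Analysis"
begin

text \<open>The Cantor set 2^omega is the type nat => bool, carrying the product topology
(Function_Topology) of the discrete two-point space bool (order topology on bool).\<close>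

type_synonym cantor = "nat \<Rightarrow> bool"

definition covered_by :: "(cantor \<times> cantor) set \<Rightarrow> (cantor \<Rightarrow> cantor) set \<Rightarrow> bool" where
  "covered_by M F \<longleftrightarrow> (\<forall>(x, y) \<in> M. \<exists>f \<in> F. y = f x \<or> x = f y)"

definition maximal_covered_square :: "(cantor \<Rightarrow> cantor) set \<Rightarrow> cantor set \<Rightarrow> bool" where
  "maximal_covered_square F S \<longleftrightarrow>
     covered_by (S \<times> S) F \<and> (\<forall>T. S \<subseteq> T \<and> covered_by (T \<times> T) F \<longrightarrow> T = S)"

end

theory Submission
  imports Defs
begin

definition fam :: "nat \<Rightarrow> cantor \<Rightarrow> cantor" where
  "fam n = (if n = 0 then id else (\<lambda>z k. z (prod_encode (n, k))))"

definition enc :: "(nat \<Rightarrow> cantor) \<Rightarrow> cantor \<Rightarrow> cantor" where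
  "enc e x = (\<lambda>i. case prod_decode i of (0, k) \<Rightarrow> x k | (Suc n, k) \<Rightarrow> e n k)"

lemma fam_enc: "fam (Suc n) (enc e x) = e n"
  by (auto simp: fam_def enc_def)

lemma inj_enc: "inj (enc e)"
proof (rule injI)
  fix x y assume "enc e x = enc e y"
  then have "\<And>k. enc e x (prod_encode (0,k)) = enc e y (prod_encode (0,k))" by simp
  then show "x = y" by (auto simp: enc_def)
qed

lemma uncountable_cantor: "uncountable (UNIV :: cantor set)"
proof
  assume "countable (UNIV :: cantor set)"
  then obtain g :: "nat \<Rightarrow> cantor" where "surj g"
    by (metis UNIV_not_empty range_from_nat_into)
  then obtain n where "g n = (\<lambda>m. \<not> g m m)" by (metis surjD)
  then show False by (metis (full_types))
qed

lemma cont_fam: "continuous_on UNIV (fam n)"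
proof (cases "n = 0")
  case True then show ?thesis by (simp add: fam_def continuous_on_id)
next
  case False
  have "continuous_on UNIV (\<lambda>z::cantor. \<lambda>k. z (prod_encode (n, k)))"
    by (intro continuous_on_coordinatewise_then_product continuous_on_product_coordinates)
  then show ?thesis using False by (simp add: fam_def)
qed

theorem theorem2p1:
  "\<exists>f :: nat \<Rightarrow> cantor \<Rightarrow> cantor.
     (\<forall>n. continuous_on UNIV (f n)) \<and>
     (\<forall>S. maximal_covered_square (range f) S \<longrightarrow> uncountable S)"
proof (intro exI[of _ fam] conjI allI impI)
  fix n show "continuous_on UNIV (fam n)" by (rule cont_fam)
next
  fix S assume max: "maximal_covered_square (range fam) S"
  show "uncountable S"
  proof
    assume cS: "countable S"
    define e where "e = from_nat_into S"
    have Se: "S \<subseteq> range e" using cS by (simp add: e_def subset_range_from_nat_into)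
    have "countable (enc e -` S)"
    proof -
      have "enc e ` (enc e -` S) \<subseteq> S" by auto
      then have "countable (enc e ` (enc e -` S))" using cS countable_subset by blast
      then show ?thesis using inj_enc countable_image_inj_on inj_on_subset subset_UNIV by metis
    qed
    then obtain x where x: "enc e x \<notin> S"
    proof -
      have "enc e -` S \<noteq> UNIV" using uncountable_cantor \<open>countable (enc e -` S)\<close> by metis
      then show ?thesis using that by blast
    qed
    define T where "T = insert (enc e x) S"
    have cov: "covered_by (S \<times> S) (range fam)" using max by (simp add: maximal_covered_square_def)
    have "covered_by (T \<times> T) (range fam)"
      unfolding covered_by_def
    proof (clarify)
      fix a b assume a: "a \<in> T" and b: "b \<in> T"
      show "\<exists>f\<in>range fam. b = f a \<or> a = f b"
      proof (cases "a \<in> S")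
        case aS: True
        show ?thesis
        proof (cases "b \<in> S")
          case True then show ?thesis using aS cov unfolding covered_by_def by blast
        next
          case False
          then have "b = enc e x" using b T_def by auto
          obtain n where "a = e n" using aS Se by auto
          then have "a = fam (Suc n) b" using \<open>b = enc e x\<close> fam_enc by simp
          then show ?thesis by blast
        qed
      next
        case False
        then have aa: "a = enc e x" using a T_def by auto
        show ?thesis
        proof (cases "b \<in> S")
          case True
          obtain n where "b = e n" using True Se by auto
          then have "b = fam (Suc n) a" using aa fam_enc by simp
          then show ?thesis by blast
        next
          case False
          then have "b = a" using aa b T_def by auto
          then have "b = fam 0 a" by (simp add: fam_def)
          then show ?thesis by blast
        qed
      qed
    qed
    then have "T = S" using max unfolding maximal_covered_square_def T_def by blast
    then show False using x T_def by auto
  qed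
qed

end
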